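(* For every integer $n\ge1$ and every $u\in V$, $\Pr(E_{5u})<\dfrac{36\,\zeta(3)}{\ln^{2}(n+1)}$, where $\zeta(3)=\sum_{i\ge1} i^{-3}$.
   Context: For an integer $n\ge1$, the $n$-octahedral graph $G'_n=(V,E')$ is the undirected graph with vertex set $V=\{u\in\mathbb{Z}^3:|u_1|+|u_2|+|u_3|=n\}$ and edge set $E'=\{\{v,w\}\subset V: v\neq w,\ |v_i-w_i|\le 1 \text{ for all } i=1,2,3\}$. For $u,v\in V$, $d_{uv}$ denotes the shortest-path distance in $G'_n$, and $Z_u=\left(\sum_{w\in V\setminus\{u\}} d_{uw}^{-2}\right)^{-1}$. The OSW random graph $G_n=(V,E)$ is the directed graph in which, for every $\{u,v\}\in E'$, both $(u,v),(v,u)\in E$, and in addition each vertex $u\in V$, independently of the others, chooses one vertex $v\in V\setminus\{u\}$ with probability $Z_u d_{uv}^{-2}$ and the long-range edge $(u,v)$ is added; $C_{uv}$ denotes the event that $u$ chooses $v$. For an ordered pair $(x,y)$ of distinct vertices, say $(x,y)$ is of type $s$ if $\{x,y\}\in E'$, and of type $w$ if $d_{xy}\ge2$ and $C_{xy}$ occurs. A C3 rooted at $u$ of type $(t_1,t_2,t_3)\in\{s,w\}^3$ is a triple $(u,a,b)$ of pairwise distinct vertices such that $(u,a)$ is of type $t_1$, $(a,b)$ is of type $t_2$ and $(b,u)$ is of type $t_3$. $E_{5u}$ is the event that there exists a C3 rooted at $u$ of type $(w,s,w)$. *)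

theory Defs
  imports "HOL-Probability.Probability"
begin

type_synonym vtx = "int \<times> int \<times> int"

definition octV :: "nat \<Rightarrow> vtx set" where
  "octV n = {(x, y, z). \<bar>x\<bar> + \<bar>y\<bar> + \<bar>z\<bar> = int n}"

definition octE :: "nat \<Rightarrow> (vtx \<times> vtx) set" where
  "octE n = {((x1, y1, z1), (x2, y2, z2)).
      (x1, y1, z1) \<in> octV n \<and> (x2, y2, z2) \<in> octV n \<and> (x1, y1, z1) \<noteq> (x2, y2, z2) \<and>
      \<bar>x1 - x2\<bar> \<le> 1 \<and> \<bar>y1 - y2\<bar> \<le> 1 \<and> \<bar>z1 - z2\<bar> \<le> 1}"

definition octd :: "nat \<Rightarrow> vtx \<Rightarrow> vtx \<Rightarrow> nat" where
  "octd n u v = (LEAST k. (u, v) \<in> octE n ^^ k)"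

definition octZ :: "nat \<Rightarrow> vtx \<Rightarrow> real" where
  "octZ n u = inverse (\<Sum>w\<in>octV n - {u}. 1 / (real (octd n u w))\<^sup>2)"

definition choice_pmf :: "nat \<Rightarrow> vtx \<Rightarrow> vtx pmf" where
  "choice_pmf n u = embed_pmf (\<lambda>v. if v \<in> octV n - {u}
       then octZ n u / (real (octd n u v))\<^sup>2 else 0)"

definition choices_pmf :: "nat \<Rightarrow> (vtx \<Rightarrow> vtx) pmf" where
  "choices_pmf n = Pi_pmf (octV n) (0, 0, 0) (choice_pmf n)"

definition E5 :: "nat \<Rightarrow> vtx \<Rightarrow> (vtx \<Rightarrow> vtx) set" where
  "E5 n u = {f. \<exists>a b. u \<noteq> a \<and> a \<noteq> b \<and> b \<noteq> u \<and>
      octd n u a \<ge> 2 \<and> f u = a \<and>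
      {a, b} \<in> {{v, w} | v w. (v, w) \<in> octE n} \<and>
      octd n b u \<ge> 2 \<and> f b = u}"

end

theory Submission
  imports Defs "HOL-Analysis.Harmonic_Numbers"
begin

definition rho :: "vtx \<Rightarrow> vtx \<Rightarrow> nat" where
  "rho a b = (case a of (x1,y1,z1) \<Rightarrow> case b of (x2,y2,z2) \<Rightarrow>
      nat (max \<bar>x1-x2\<bar> (max \<bar>y1-y2\<bar> \<bar>z1-z2\<bar>)))"

lemma rho_simp: "rho (x1,y1,z1) (x2,y2,z2) = nat (max \<bar>x1-x2\<bar> (max \<bar>y1-y2\<bar> \<bar>z1-z2\<bar>))"
  by (simp only: rho_def prod.case)

lemma rho_sym: "rho a b = rho b a"
  by (cases a; cases b) (simp add: rho_simp abs_minus_commute max.commute max.left_commute)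

lemma rho_int: "int (rho (x1,y1,z1) (x2,y2,z2)) = max \<bar>x1-x2\<bar> (max \<bar>y1-y2\<bar> \<bar>z1-z2\<bar>)"
  by (simp add: rho_simp le_max_iff_disj)

lemma rho_triangle: "rho a b \<le> rho a c + rho c b"
proof -
  obtain x1 y1 z1 where a: "a = (x1,y1,z1)" by (cases a)
  obtain x2 y2 z2 where b: "b = (x2,y2,z2)" by (cases b)
  obtain x3 y3 z3 where c: "c = (x3,y3,z3)" by (cases c)
  have "int (rho a b) \<le> int (rho a c) + int (rho c b)"
    unfolding a b c rho_int max.bounded_iff
    by (smt (verit) max.cobounded1 max.cobounded2)
  then show ?thesis by simp
qed

lemma octE_rho: "(a,b) \<in> octE n \<Longrightarrow> rho a b \<le> 1"
  by (cases a; cases b) (auto simp: octE_def rho_simp)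

lemma octE_sym: "(a,b) \<in> octE n \<Longrightarrow> (b,a) \<in> octE n"
  by (cases a; cases b) (auto simp: octE_def abs_minus_commute)

lemma octE_V: "(a,b) \<in> octE n \<Longrightarrow> a \<in> octV n \<and> b \<in> octV n \<and> a \<noteq> b"
  by (cases a; cases b) (auto simp: octE_def)

lemma relpow_rho: "(a,b) \<in> octE n ^^ k \<Longrightarrow> rho a b \<le> k"
proof (induction k arbitrary: b)
  case 0 then have "a = b" by simp
  then show ?case by (cases b) (simp add: rho_simp)
next
  case (Suc k)
  then obtain c where "(a,c) \<in> octE n ^^ k" "(c,b) \<in> octE n" by auto
  then show ?case using Suc.IH[of c] octE_rho[of c b n] rho_triangle[of a b c] by linarith
qed

lemma finite_octV: "finite (octV n)"
proof -
  have "octV n \<subseteq> {-int n..int n} \<times> {-int n..int n} \<times> {-int n..int n}"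
    by (auto simp: octV_def)
  then show ?thesis by (rule finite_subset) auto
qed

lemma octE_sub: "octE n \<subseteq> octV n \<times> octV n"
  using octE_V by auto

lemma finite_octE: "finite (octE n)"
  using finite_subset[OF octE_sub] finite_octV by auto

lemma rho_pos: "a \<noteq> b \<Longrightarrow> rho a b \<ge> 1"
  by (cases a; cases b) (auto simp: rho_simp)

lemma rho1_edge: "a \<in> octV n \<Longrightarrow> b \<in> octV n \<Longrightarrow> a \<noteq> b \<Longrightarrow> rho a b \<le> 1 \<Longrightarrow> (a,b) \<in> octE n"
  by (cases a; cases b) (auto simp: octE_def rho_simp)

lemma fam_path:
  assumes "\<And>k j. k < K \<Longrightarrow> j \<le> k \<Longrightarrow> (w k j, w (Suc k) j) \<in> octE n \<and> (w k j, w (Suc k) (Suc j)) \<in> octE n"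
  shows "k \<le> K \<Longrightarrow> j \<le> k \<Longrightarrow> (w 0 0, w k j) \<in> octE n ^^ k"
proof (induction k arbitrary: j)
  case 0 then show ?case by simp
next
  case (Suc k)
  show ?case
  proof (cases "j \<le> k")
    case True
    then have "(w 0 0, w k j) \<in> octE n ^^ k" using Suc by auto
    moreover have "(w k j, w (Suc k) j) \<in> octE n" using assms Suc.prems True by auto
    ultimately show ?thesis by auto
  next
    case False
    then have j: "j = Suc k" using Suc.prems by auto
    have "(w 0 0, w k k) \<in> octE n ^^ k" using Suc by auto
    moreover have "(w k k, w (Suc k) (Suc k)) \<in> octE n" using assms Suc.prems by auto
    ultimately show ?thesis using j by auto
  qed
qed

lemma abs_add_sgn: "s = 1 \<or> s = -1 \<Longrightarrow> s * t \<ge> 0 \<Longrightarrow> m \<ge> 0 \<Longrightarrow> \<bar>t + s*m\<bar> = \<bar>t\<bar> + m"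
  for s t m :: int by (auto simp: abs_if)
lemma abs_sub_sgn: "s = 1 \<or> s = -1 \<Longrightarrow> s * t \<ge> 0 \<Longrightarrow> m \<ge> 0 \<Longrightarrow> m \<le> \<bar>t\<bar> \<Longrightarrow> \<bar>t - s*m\<bar> = \<bar>t\<bar> - m"
  for s t m :: int by (auto simp: abs_if)

definition sg :: "int \<Rightarrow> int" where "sg t = (if t \<ge> 0 then 1 else -1)"
lemma sg: "sg t = 1 \<or> sg t = -1" "sg t * t \<ge> 0" by (auto simp: sg_def)

definition fam1 :: "vtx \<Rightarrow> int \<Rightarrow> int \<Rightarrow> int \<Rightarrow> nat \<Rightarrow> nat \<Rightarrow> vtx" where
  "fam1 v s1 s2 s3 k j = (case v of (a,b,c) \<Rightarrow> (a - s1 * int k, b + s2 * int j, c + s3 * (int k - int j)))"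
definition fam2 :: "vtx \<Rightarrow> int \<Rightarrow> int \<Rightarrow> int \<Rightarrow> nat \<Rightarrow> nat \<Rightarrow> vtx" where
  "fam2 v s1 s2 s3 k j = (case v of (a,b,c) \<Rightarrow> (a + s1 * int j, b - s2 * int k, c + s3 * (int k - int j)))"
definition fam3 :: "vtx \<Rightarrow> int \<Rightarrow> int \<Rightarrow> int \<Rightarrow> nat \<Rightarrow> nat \<Rightarrow> vtx" where
  "fam3 v s1 s2 s3 k j = (case v of (a,b,c) \<Rightarrow> (a + s1 * (int k - int j), b + s2 * int j, c - s3 * int k))"

lemma fam1_path:
  assumes v: "v = (a,b,c)" "v \<in> octV n" and s: "s1 = 1 \<or> s1 = -1" "s2 = 1 \<or> s2 = -1" "s3 = 1 \<or> s3 = -1"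
    and ss: "s1 * a \<ge> 0" "s2 * b \<ge> 0" "s3 * c \<ge> 0" and k: "int k \<le> \<bar>a\<bar>" "j \<le> k"
  shows "(v, fam1 v s1 s2 s3 k j) \<in> octE n ^^ k"
proof -
  have V: "fam1 v s1 s2 s3 k j \<in> octV n" if "int k \<le> \<bar>a\<bar>" "j \<le> k" for k j
  proof -
    have "\<bar>a - s1 * int k\<bar> = \<bar>a\<bar> - int k" using abs_sub_sgn[of s1 a "int k"] s ss that by (auto simp: mult.commute)
    moreover have "\<bar>b + s2 * int j\<bar> = \<bar>b\<bar> + int j" using abs_add_sgn[of s2 b "int j"] s ss by auto
    moreover have "\<bar>c + s3 * (int k - int j)\<bar> = \<bar>c\<bar> + (int k - int j)" using abs_add_sgn[of s3 c "int k - int j"] s ss that by auto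
    ultimately show ?thesis using v by (auto simp: fam1_def octV_def)
  qed
  have "(fam1 v s1 s2 s3 0 0, fam1 v s1 s2 s3 k j) \<in> octE n ^^ k"
  proof (rule fam_path[where K = "nat \<bar>a\<bar>"])
    fix k j assume kj: "k < nat \<bar>a\<bar>" "j \<le> k"
    have V1: "fam1 v s1 s2 s3 k j \<in> octV n" "fam1 v s1 s2 s3 (Suc k) j \<in> octV n" "fam1 v s1 s2 s3 (Suc k) (Suc j) \<in> octV n"
      using V kj by auto
    show "(fam1 v s1 s2 s3 k j, fam1 v s1 s2 s3 (Suc k) j) \<in> octE n \<and> (fam1 v s1 s2 s3 k j, fam1 v s1 s2 s3 (Suc k) (Suc j)) \<in> octE n"
      using V1 s unfolding octE_def fam1_def v by (auto simp: algebra_simps)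
  qed (use k in auto)
  then show ?thesis by (simp add: fam1_def v)
qed

lemma fam2_path:
  assumes v: "v = (a,b,c)" "v \<in> octV n" and s: "s1 = 1 \<or> s1 = -1" "s2 = 1 \<or> s2 = -1" "s3 = 1 \<or> s3 = -1"
    and ss: "s1 * a \<ge> 0" "s2 * b \<ge> 0" "s3 * c \<ge> 0" and k: "int k \<le> \<bar>b\<bar>" "j \<le> k"
  shows "(v, fam2 v s1 s2 s3 k j) \<in> octE n ^^ k"
proof -
  have V: "fam2 v s1 s2 s3 k j \<in> octV n" if "int k \<le> \<bar>b\<bar>" "j \<le> k" for k j
  proof -
    have "\<bar>b - s2 * int k\<bar> = \<bar>b\<bar> - int k" using abs_sub_sgn[of s2 b "int k"] s ss that by (auto simp: mult.commute)
    moreover have "\<bar>a + s1 * int j\<bar> = \<bar>a\<bar> + int j" using abs_add_sgn[of s1 a "int j"] s ss by auto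
    moreover have "\<bar>c + s3 * (int k - int j)\<bar> = \<bar>c\<bar> + (int k - int j)" using abs_add_sgn[of s3 c "int k - int j"] s ss that by auto
    ultimately show ?thesis using v by (auto simp: fam2_def octV_def)
  qed
  have "(fam2 v s1 s2 s3 0 0, fam2 v s1 s2 s3 k j) \<in> octE n ^^ k"
  proof (rule fam_path[where K = "nat \<bar>b\<bar>"])
    fix k j assume kj: "k < nat \<bar>b\<bar>" "j \<le> k"
    have V1: "fam2 v s1 s2 s3 k j \<in> octV n" "fam2 v s1 s2 s3 (Suc k) j \<in> octV n" "fam2 v s1 s2 s3 (Suc k) (Suc j) \<in> octV n"
      using V kj by auto
    show "(fam2 v s1 s2 s3 k j, fam2 v s1 s2 s3 (Suc k) j) \<in> octE n \<and> (fam2 v s1 s2 s3 k j, fam2 v s1 s2 s3 (Suc k) (Suc j)) \<in> octE n"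
      using V1 s unfolding octE_def fam2_def v by (auto simp: algebra_simps)
  qed (use k in auto)
  then show ?thesis by (simp add: fam2_def v)
qed

lemma fam3_path:
  assumes v: "v = (a,b,c)" "v \<in> octV n" and s: "s1 = 1 \<or> s1 = -1" "s2 = 1 \<or> s2 = -1" "s3 = 1 \<or> s3 = -1"
    and ss: "s1 * a \<ge> 0" "s2 * b \<ge> 0" "s3 * c \<ge> 0" and k: "int k \<le> \<bar>c\<bar>" "j \<le> k"
  shows "(v, fam3 v s1 s2 s3 k j) \<in> octE n ^^ k"
proof -
  have V: "fam3 v s1 s2 s3 k j \<in> octV n" if "int k \<le> \<bar>c\<bar>" "j \<le> k" for k j
  proof -
    have "\<bar>c - s3 * int k\<bar> = \<bar>c\<bar> - int k" using abs_sub_sgn[of s3 c "int k"] s ss that by (auto simp: mult.commute)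
    moreover have "\<bar>b + s2 * int j\<bar> = \<bar>b\<bar> + int j" using abs_add_sgn[of s2 b "int j"] s ss by auto
    moreover have "\<bar>a + s1 * (int k - int j)\<bar> = \<bar>a\<bar> + (int k - int j)" using abs_add_sgn[of s1 a "int k - int j"] s ss that by auto
    ultimately show ?thesis using v by (auto simp: fam3_def octV_def)
  qed
  have "(fam3 v s1 s2 s3 0 0, fam3 v s1 s2 s3 k j) \<in> octE n ^^ k"
  proof (rule fam_path[where K = "nat \<bar>c\<bar>"])
    fix k j assume kj: "k < nat \<bar>c\<bar>" "j \<le> k"
    have V1: "fam3 v s1 s2 s3 k j \<in> octV n" "fam3 v s1 s2 s3 (Suc k) j \<in> octV n" "fam3 v s1 s2 s3 (Suc k) (Suc j) \<in> octV n"
      using V kj by auto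
    show "(fam3 v s1 s2 s3 k j, fam3 v s1 s2 s3 (Suc k) j) \<in> octE n \<and> (fam3 v s1 s2 s3 k j, fam3 v s1 s2 s3 (Suc k) (Suc j)) \<in> octE n"
      using V1 s unfolding octE_def fam3_def v by (auto simp: algebra_simps)
  qed (use k in auto)
  then show ?thesis by (simp add: fam3_def v)
qed


lemma relpow_V: "(v,w) \<in> octE n ^^ k \<Longrightarrow> v \<in> octV n \<Longrightarrow> w \<in> octV n"
  by (induction k arbitrary: w) (auto dest: octE_V)

lemma sg_abs: "sg t * \<bar>t\<bar> = t" by (simp add: sg_def)

lemma conn_top:
  assumes v: "v \<in> octV n"
  shows "(v, (0, int n, 0)) \<in> (octE n)\<^sup>*"
proof -
  obtain a b c where vv: "v = (a,b,c)" by (cases v)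
  define k1 where "k1 = nat \<bar>a\<bar>"
  have p1: "(v, fam1 v (sg a) (sg b) (sg c) k1 k1) \<in> octE n ^^ k1"
    by (rule fam1_path[OF vv v]) (use sg in \<open>auto simp: k1_def\<close>)
  define b' where "b' = b + sg b * \<bar>a\<bar>"
  have e1: "fam1 v (sg a) (sg b) (sg c) k1 k1 = (0, b', c)"
    by (simp add: fam1_def vv k1_def b'_def sg_abs)
  have p1': "(v, (0,b',c)) \<in> octE n ^^ k1" using p1 e1 by simp
  have v1: "(0,b',c) \<in> octV n" using relpow_V[OF p1' v] .
  define k2 where "k2 = nat \<bar>c\<bar>"
  have p2: "((0,b',c), fam3 (0,b',c) 1 (sg b') (sg c) k2 k2) \<in> octE n ^^ k2"
    by (rule fam3_path[OF refl v1]) (use sg in \<open>auto simp: k2_def\<close>)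
  define b'' where "b'' = b' + sg b' * \<bar>c\<bar>"
  have e2: "fam3 (0,b',c) 1 (sg b') (sg c) k2 k2 = (0, b'', 0)"
    by (simp add: fam3_def k2_def b''_def sg_abs)
  have p2': "((0,b',c), (0,b'',0)) \<in> octE n ^^ k2" using p2 e2 by simp
  have v2: "(0,b'',0) \<in> octV n" using relpow_V[OF p2' v1] .
  have r1: "(v, (0,b'',0)) \<in> (octE n)\<^sup>*"
    using p1' p2' relpow_imp_rtrancl rtrancl_trans by metis
  have "b'' = int n \<or> b'' = - int n" using v2 by (auto simp: octV_def abs_if split: if_splits)
  then show ?thesis
  proof
    assume "b'' = int n" then show ?thesis using r1 by simp
  next
    assume bn: "b'' = - int n"
    have p3: "((0,-int n,0), fam2 (0,-int n,0) 1 (-1) 1 n n) \<in> octE n ^^ n"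
      by (rule fam2_path[OF refl]) (use v2 bn in auto)
    have e3: "fam2 (0,-int n,0) 1 (-1) 1 n n = (int n, 0, 0)" by (simp add: fam2_def)
    have v3: "(int n, 0, 0) \<in> octV n" by (simp add: octV_def)
    have p4: "((int n,0,0), fam1 (int n,0,0) 1 1 1 n n) \<in> octE n ^^ n"
      by (rule fam1_path[OF refl v3]) auto
    have e4: "fam1 (int n,0,0) 1 1 1 n n = (0, int n, 0)" by (simp add: fam1_def)
    show ?thesis using r1 p3 p4 e3 e4 bn relpow_imp_rtrancl rtrancl_trans by metis
  qed
qed

lemma conn: assumes "v \<in> octV n" "w \<in> octV n" shows "\<exists>k. (v,w) \<in> octE n ^^ k"
proof -
  have sym: "(octE n)\<inverse> = octE n" using octE_sym by auto
  have "(w, (0, int n, 0)) \<in> (octE n)\<^sup>*" using conn_top assms by auto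
  then have "((0, int n, 0), w) \<in> ((octE n)\<inverse>)\<^sup>*" by (simp add: rtrancl_converse)
  then have "((0, int n, 0), w) \<in> (octE n)\<^sup>*" using sym by simp
  then have "(v, w) \<in> (octE n)\<^sup>*" using conn_top[OF assms(1)] rtrancl_trans by metis
  then show ?thesis using rtrancl_power by blast
qed

lemma d_path: "(v,w) \<in> octE n ^^ k \<Longrightarrow> octd n v w \<le> k"
  unfolding octd_def by (rule Least_le)

lemma d_reach: "v \<in> octV n \<Longrightarrow> w \<in> octV n \<Longrightarrow> (v,w) \<in> octE n ^^ (octd n v w)"
  unfolding octd_def using conn by (metis LeastI_ex)

lemma d_ge_rho: "v \<in> octV n \<Longrightarrow> w \<in> octV n \<Longrightarrow> rho v w \<le> octd n v w"
  using d_reach relpow_rho by blast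

lemma d_pos: "v \<in> octV n \<Longrightarrow> w \<in> octV n \<Longrightarrow> v \<noteq> w \<Longrightarrow> 1 \<le> octd n v w"
  using d_ge_rho rho_pos by (meson order_trans)

lemma relpow_sym: "(v,w) \<in> octE n ^^ k \<Longrightarrow> (w,v) \<in> octE n ^^ k"
proof (induction k arbitrary: w)
  case 0 then show ?case by simp
next
  case (Suc k)
  then obtain c where "(v,c) \<in> octE n ^^ k" "(c,w) \<in> octE n" by auto
  then show ?case using Suc.IH octE_sym relpow_Suc_I2 by metis
qed

lemma ln3: "ln (3::real) < 5/4"
proof -
  have "exp (5/32::real) \<ge> 1 + 5/32" by (rule exp_ge_add_one_self)
  then have "(37/32::real)^8 \<le> exp (5/32) ^ 8" by (intro power_mono) auto
  also have "exp (5/32::real) ^ 8 = exp (of_nat 8 * (5/32))" by (rule exp_of_nat_mult[symmetric])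
  finally have "(37/32::real)^8 \<le> exp (5/4)" by simp
  moreover have "(3::real) < (37/32)^8" by (simp add: power_divide)
  ultimately have "3 < exp (5/4::real)" by linarith
  then show ?thesis by (metis exp_gt_zero ln_exp ln_less_cancel_iff zero_less_numeral)
qed

lemma harm_bound:
  assumes "x \<ge> 1" "n \<ge> 1" "n \<le> 3*x"
  shows "ln (real n + 1) < harm x + (\<Sum>k=1..x. 1/(real k)^2)"
proof (cases "x = 1")
  case True
  then have "n \<le> 3" using assms by simp
  then have "ln (real n + 1) \<le> ln 4" by simp
  also have "ln (4::real) = 2 * ln 2" using ln_realpow[of 2 2] by simp
  also have "\<dots> < 2" using ln_2_less_1 by simp
  finally show ?thesis using True by (simp add: harm_def)
next
  case False
  then have x2: "x \<ge> 2" using assms by simp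
  have "(\<Sum>k\<in>{1,2}. 1/(real k)^2) \<le> (\<Sum>k=1..x. 1/(real k)^2)"
    by (rule sum_mono2) (use x2 in auto)
  then have s: "5/4 \<le> (\<Sum>k=1..x. 1/(real k)^2)" by simp
  have "ln (real n + 1) \<le> ln (3 * (real x + 1))" using assms by simp
  also have "\<dots> = ln 3 + ln (real x + 1)" by (subst ln_mult) auto
  also have "\<dots> < 5/4 + harm x" using ln3 ln_le_harm[of x] by simp
  finally show ?thesis using s by simp
qed

definition Ssum :: "nat \<Rightarrow> vtx \<Rightarrow> real" where
  "Ssum n v = (\<Sum>w\<in>octV n - {v}. 1 / (real (octd n v w))\<^sup>2)"

lemma Zsum_lower:
  assumes v: "v \<in> octV n" and fin: "finite I" and inj: "inj_on \<phi> I"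
    and P: "\<And>p. p \<in> I \<Longrightarrow> \<phi> p \<in> octV n \<and> \<phi> p \<noteq> v \<and> octd n v (\<phi> p) \<le> fst p"
  shows "(\<Sum>p\<in>I. 1/(real (fst p))^2) \<le> Ssum n v"
proof -
  have "(\<Sum>p\<in>I. 1/(real (fst p))^2) \<le> (\<Sum>p\<in>I. 1/(real (octd n v (\<phi> p)))^2)"
  proof (rule sum_mono)
    fix p assume p: "p \<in> I"
    have "1 \<le> octd n v (\<phi> p)" using d_pos[OF v, of "\<phi> p"] P[OF p] by auto
    then show "1/(real (fst p))^2 \<le> 1/(real (octd n v (\<phi> p)))^2"
      using P[OF p] by (intro divide_left_mono power_mono) auto
  qed
  also have "\<dots> = (\<Sum>w\<in>\<phi> ` I. 1/(real (octd n v w))^2)"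
    by (simp add: sum.reindex[OF inj])
  also have "\<dots> \<le> Ssum n v" unfolding Ssum_def
  proof (rule sum_mono2)
    show "finite (octV n - {v})" using finite_octV by simp
    show "\<phi> ` I \<subseteq> octV n - {v}"
    proof
      fix w assume "w \<in> \<phi> ` I"
      then obtain p where "p \<in> I" "w = \<phi> p" by blast
      then show "w \<in> octV n - {v}" using P[of p] by simp
    qed
  qed simp
  finally show ?thesis .
qed

lemma sigma_sum: "(\<Sum>p\<in>Sigma {1..x} (\<lambda>k. {0..k}). 1/(real (fst p))^2) = harm x + (\<Sum>k=1..x. 1/(real k)^2)"
proof -
  have "(\<Sum>p\<in>Sigma {1..x} (\<lambda>k. {0..k}). 1/(real (fst p))^2) = (\<Sum>k=1..x. \<Sum>j=0..k. 1/(real k)^2)"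
    by (subst sum.Sigma) (auto simp: case_prod_beta)
  also have "\<dots> = (\<Sum>k=1..x. (real k + 1) /(real k)^2)" by (intro sum.cong) (auto simp: field_simps)
  also have "\<dots> = (\<Sum>k=1..x. inverse (real k) + 1 /(real k)^2)"
    by (intro sum.cong) (auto simp: field_simps power2_eq_square)
  also have "\<dots> = harm x + (\<Sum>k=1..x. 1/(real k)^2)" by (simp add: sum.distrib harm_def)
  finally show ?thesis .
qed

lemma Z_case1:
  assumes vv: "v = (a,b,c)" and v: "v \<in> octV n"
  shows "harm (nat \<bar>a\<bar>) + (\<Sum>k=1..nat \<bar>a\<bar>. 1/(real k)^2) \<le> Ssum n v"
proof -
  define \<phi> where "\<phi> = (\<lambda>p. fam1 v (sg a) (sg b) (sg c) (fst p) (snd p))"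
  define I where "I = Sigma {1..nat \<bar>a\<bar>} (\<lambda>k. {0..k})"
  have path: "(v, \<phi> p) \<in> octE n ^^ (fst p)" if "p \<in> I" for p
  proof -
    obtain k j where pk: "p = (k,j)" by (cases p)
    have kj: "int k \<le> \<bar>a\<bar>" "j \<le> k" using that pk by (auto simp: I_def)
    show ?thesis unfolding \<phi>_def pk fst_conv snd_conv
      by (rule fam1_path[OF vv v sg(1) sg(1) sg(1) sg(2) sg(2) sg(2) kj])
  qed
  have "(\<Sum>p\<in>I. 1/(real (fst p))^2) \<le> Ssum n v"
  proof (rule Zsum_lower[OF v])
    show "finite I" by (simp add: I_def)
    show "inj_on \<phi> I"
    proof (rule inj_onI)
      fix p q assume pq: "p \<in> I" "q \<in> I" "\<phi> p = \<phi> q"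
      obtain k j where p: "p = (k,j)" by (cases p)
      obtain k' j' where q: "q = (k',j')" by (cases q)
      have e: "a - sg a * int k = a - sg a * int k'" "b + sg b * int j = b + sg b * int j'"
        using pq(3) unfolding p q \<phi>_def fam1_def vv by simp_all
      have "int k = int k'" using e(1) sg(1)[of a] by auto
      moreover have "int j = int j'" using e(2) sg(1)[of b] by auto
      ultimately show "p = q" using p q by simp
    qed
    fix p assume p: "p \<in> I"
    obtain k j where pk: "p = (k,j)" by (cases p)
    have k1: "k \<ge> 1" using p pk by (simp add: I_def)
    have "\<phi> p \<noteq> v"
    proof
      assume "\<phi> p = v"
      then have "a - sg a * int k = a" unfolding pk \<phi>_def fam1_def vv by simp
      then show False using k1 sg(1)[of a] by auto
    qed
    then show "\<phi> p \<in> octV n \<and> \<phi> p \<noteq> v \<and> octd n v (\<phi> p) \<le> fst p"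
      using relpow_V[OF path[OF p] v] d_path[OF path[OF p]] by simp
  qed
  then show ?thesis unfolding I_def sigma_sum .
qed

lemma Z_case2:
  assumes vv: "v = (a,b,c)" and v: "v \<in> octV n"
  shows "harm (nat \<bar>b\<bar>) + (\<Sum>k=1..nat \<bar>b\<bar>. 1/(real k)^2) \<le> Ssum n v"
proof -
  define \<phi> where "\<phi> = (\<lambda>p. fam2 v (sg a) (sg b) (sg c) (fst p) (snd p))"
  define I where "I = Sigma {1..nat \<bar>b\<bar>} (\<lambda>k. {0..k})"
  have path: "(v, \<phi> p) \<in> octE n ^^ (fst p)" if "p \<in> I" for p
  proof -
    obtain k j where pk: "p = (k,j)" by (cases p)
    have kj: "int k \<le> \<bar>b\<bar>" "j \<le> k" using that pk by (auto simp: I_def)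
    show ?thesis unfolding \<phi>_def pk fst_conv snd_conv
      by (rule fam2_path[OF vv v sg(1) sg(1) sg(1) sg(2) sg(2) sg(2) kj])
  qed
  have "(\<Sum>p\<in>I. 1/(real (fst p))^2) \<le> Ssum n v"
  proof (rule Zsum_lower[OF v])
    show "finite I" by (simp add: I_def)
    show "inj_on \<phi> I"
    proof (rule inj_onI)
      fix p q assume pq: "p \<in> I" "q \<in> I" "\<phi> p = \<phi> q"
      obtain k j where p: "p = (k,j)" by (cases p)
      obtain k' j' where q: "q = (k',j')" by (cases q)
      have e: "b - sg b * int k = b - sg b * int k'" "a + sg a * int j = a + sg a * int j'"
        using pq(3) unfolding p q \<phi>_def fam2_def vv by simp_all
      have "int k = int k'" using e(1) sg(1)[of b] by auto
      moreover have "int j = int j'" using e(2) sg(1)[of a] by auto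
      ultimately show "p = q" using p q by simp
    qed
    fix p assume p: "p \<in> I"
    obtain k j where pk: "p = (k,j)" by (cases p)
    have k1: "k \<ge> 1" using p pk by (simp add: I_def)
    have "\<phi> p \<noteq> v"
    proof
      assume "\<phi> p = v"
      then have "b - sg b * int k = b" unfolding pk \<phi>_def fam2_def vv by simp
      then show False using k1 sg(1)[of b] by auto
    qed
    then show "\<phi> p \<in> octV n \<and> \<phi> p \<noteq> v \<and> octd n v (\<phi> p) \<le> fst p"
      using relpow_V[OF path[OF p] v] d_path[OF path[OF p]] by simp
  qed
  then show ?thesis unfolding I_def sigma_sum .
qed

lemma Z_case3:
  assumes vv: "v = (a,b,c)" and v: "v \<in> octV n"
  shows "harm (nat \<bar>c\<bar>) + (\<Sum>k=1..nat \<bar>c\<bar>. 1/(real k)^2) \<le> Ssum n v"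
proof -
  define \<phi> where "\<phi> = (\<lambda>p. fam3 v (sg a) (sg b) (sg c) (fst p) (snd p))"
  define I where "I = Sigma {1..nat \<bar>c\<bar>} (\<lambda>k. {0..k})"
  have path: "(v, \<phi> p) \<in> octE n ^^ (fst p)" if "p \<in> I" for p
  proof -
    obtain k j where pk: "p = (k,j)" by (cases p)
    have kj: "int k \<le> \<bar>c\<bar>" "j \<le> k" using that pk by (auto simp: I_def)
    show ?thesis unfolding \<phi>_def pk fst_conv snd_conv
      by (rule fam3_path[OF vv v sg(1) sg(1) sg(1) sg(2) sg(2) sg(2) kj])
  qed
  have "(\<Sum>p\<in>I. 1/(real (fst p))^2) \<le> Ssum n v"
  proof (rule Zsum_lower[OF v])
    show "finite I" by (simp add: I_def)
    show "inj_on \<phi> I"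
    proof (rule inj_onI)
      fix p q assume pq: "p \<in> I" "q \<in> I" "\<phi> p = \<phi> q"
      obtain k j where p: "p = (k,j)" by (cases p)
      obtain k' j' where q: "q = (k',j')" by (cases q)
      have e: "c - sg c * int k = c - sg c * int k'" "b + sg b * int j = b + sg b * int j'"
        using pq(3) unfolding p q \<phi>_def fam3_def vv by simp_all
      have "int k = int k'" using e(1) sg(1)[of c] by auto
      moreover have "int j = int j'" using e(2) sg(1)[of b] by auto
      ultimately show "p = q" using p q by simp
    qed
    fix p assume p: "p \<in> I"
    obtain k j where pk: "p = (k,j)" by (cases p)
    have k1: "k \<ge> 1" using p pk by (simp add: I_def)
    have "\<phi> p \<noteq> v"
    proof
      assume "\<phi> p = v"
      then have "c - sg c * int k = c" unfolding pk \<phi>_def fam3_def vv by simp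
      then show False using k1 sg(1)[of c] by auto
    qed
    then show "\<phi> p \<in> octV n \<and> \<phi> p \<noteq> v \<and> octd n v (\<phi> p) \<le> fst p"
      using relpow_V[OF path[OF p] v] d_path[OF path[OF p]] by simp
  qed
  then show ?thesis unfolding I_def sigma_sum .
qed

lemma Ssum_gt:
  assumes n: "n \<ge> 1" and v: "v \<in> octV n"
  shows "ln (real n + 1) < Ssum n v"
proof -
  obtain a b c where vv: "v = (a,b,c)" by (cases v)
  have nn: "int n = \<bar>a\<bar> + \<bar>b\<bar> + \<bar>c\<bar>" using v vv by (simp add: octV_def)
  define x where "x = max (nat \<bar>a\<bar>) (max (nat \<bar>b\<bar>) (nat \<bar>c\<bar>))"
  have ha: "\<bar>a\<bar> \<le> int x" "\<bar>b\<bar> \<le> int x" "\<bar>c\<bar> \<le> int x" unfolding x_def by (simp_all add: of_nat_max le_max_iff_disj)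
  have "int n \<le> 3 * int x" using nn ha by linarith
  then have x3: "n \<le> 3 * x" by linarith
  have x1: "x \<ge> 1" using x3 n by linarith
  have hb: "ln (real n + 1) < harm x + (\<Sum>k=1..x. 1/(real k)^2)" by (rule harm_bound[OF x1 n x3])
  have "x = nat \<bar>a\<bar> \<or> x = nat \<bar>b\<bar> \<or> x = nat \<bar>c\<bar>" unfolding x_def max_def by simp
  then show ?thesis
  proof (elim disjE)
    assume "x = nat \<bar>a\<bar>" then show ?thesis using hb Z_case1[OF vv v] by simp
  next
    assume "x = nat \<bar>b\<bar>" then show ?thesis using hb Z_case2[OF vv v] by simp
  next
    assume "x = nat \<bar>c\<bar>" then show ?thesis using hb Z_case3[OF vv v] by simp
  qed
qed

definition gg :: "int \<Rightarrow> int \<Rightarrow> int" where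
  "gg s d = (if s > 0 then d else if s < 0 then -d else \<bar>d\<bar>)"

definition D26 :: "(int \<times> int \<times> int) list" where
  "D26 = [(d1,d2,d3). d1 \<leftarrow> [-1,0,1], d2 \<leftarrow> [-1,0,1], d3 \<leftarrow> [-1,0,1], (d1,d2,d3) \<noteq> (0,0,0)]"

definition PP :: "int \<Rightarrow> int \<Rightarrow> int \<Rightarrow> int \<times> int \<times> int \<Rightarrow> bool" where
  "PP s1 s2 s3 d = (case d of (d1,d2,d3) \<Rightarrow> gg s1 d1 + gg s2 d2 + gg s3 d3 = 0)"

lemma D26_eq: "D26 = [(-1,-1,-1),(-1,-1,0),(-1,-1,1),(-1,0,-1),(-1,0,0),(-1,0,1),(-1,1,-1),(-1,1,0),(-1,1,1),
  (0,-1,-1),(0,-1,0),(0,-1,1),(0,0,-1),(0,0,1),(0,1,-1),(0,1,0),(0,1,1),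
  (1,-1,-1),(1,-1,0),(1,-1,1),(1,0,-1),(1,0,0),(1,0,1),(1,1,-1),(1,1,0),(1,1,1)]"
  by (simp add: D26_def)

lemma count6: "s1 \<in> {-1,0,1} \<Longrightarrow> s2 \<in> {-1,0,1} \<Longrightarrow> s3 \<in> {-1,0,1} \<Longrightarrow>
   length (filter (PP s1 s2 s3) D26) \<le> 6"
  unfolding D26_eq by (elim insertE emptyE; simp add: PP_def gg_def)

lemma gg_abs: "d \<in> {-1,0,1} \<Longrightarrow> \<bar>t + d\<bar> - \<bar>t\<bar> = gg (sgn t) d"
  by (auto simp: gg_def sgn_if abs_if)

lemma deg6: "card {b. (a,b) \<in> octE n} \<le> 6"
proof -
  obtain a1 a2 a3 where aa: "a = (a1,a2,a3)" by (cases a)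
  define P where "P = PP (sgn a1) (sgn a2) (sgn a3)"
  have sub: "{b. (a,b) \<in> octE n} \<subseteq> (\<lambda>(d1,d2,d3). (a1+d1,a2+d2,a3+d3)) ` set (filter P D26)"
  proof
    fix b assume "b \<in> {b. (a,b) \<in> octE n}"
    then have ab: "(a,b) \<in> octE n" by simp
    obtain b1 b2 b3 where bb: "b = (b1,b2,b3)" by (cases b)
    define d1 where "d1 = b1 - a1"
    define d2 where "d2 = b2 - a2"
    define d3 where "d3 = b3 - a3"
    have dd: "d1 \<in> {-1,0,1}" "d2 \<in> {-1,0,1}" "d3 \<in> {-1,0,1}" "(d1,d2,d3) \<noteq> (0,0,0)"
      using ab unfolding aa bb octE_def d1_def d2_def d3_def by auto
    have sums: "\<bar>a1+d1\<bar> + \<bar>a2+d2\<bar> + \<bar>a3+d3\<bar> = \<bar>a1\<bar> + \<bar>a2\<bar> + \<bar>a3\<bar>"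
      using ab unfolding aa bb octE_def octV_def d1_def d2_def d3_def by auto
    have "P (d1,d2,d3)" unfolding P_def PP_def
      using sums gg_abs[OF dd(1), of a1] gg_abs[OF dd(2), of a2] gg_abs[OF dd(3), of a3] by simp
    moreover have "(d1,d2,d3) \<in> set D26" using dd unfolding D26_eq by (simp only: insert_iff empty_iff) (elim disjE; simp)
    ultimately show "b \<in> (\<lambda>(d1,d2,d3). (a1+d1,a2+d2,a3+d3)) ` set (filter P D26)"
      by (intro image_eqI[of _ _ "(d1,d2,d3)"]) (auto simp: bb d1_def d2_def d3_def)
  qed
  have "card {b. (a,b) \<in> octE n} \<le> card ((\<lambda>(d1,d2,d3). (a1+d1,a2+d2,a3+d3)) ` set (filter P D26))"
    by (rule card_mono[OF _ sub]) simp
  also have "\<dots> \<le> card (set (filter P D26))" by (rule card_image_le) simp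
  also have "\<dots> \<le> length (filter P D26)" by (rule card_length)
  also have "\<dots> \<le> 6" unfolding P_def by (rule count6) (auto simp: sgn_if)
  finally show ?thesis .
qed

lemma card_prod3: "card (A \<times> B \<times> C) = card A * card B * card C"
  by (simp add: card_cartesian_product)

lemma shell_count:
  assumes uu: "u = (u1,u2,u3)"
  shows "card {a \<in> octV n. rho u a = m} \<le> 12 * (2*m+1)"
proof -
  define im where "im = int m"
  define S where "S = ({-1,1::int} \<times> {-im..im} \<times> {-1,1::int})"
  have cS: "card S = 4*(2*m+1)" unfolding S_def card_prod3 im_def by simp
  have fS: "finite S" unfolding S_def by simp
  define f1 where "f1 = (\<lambda>(s,t,r). (u1 + s*im, u2 + t, r * (int n - \<bar>u1 + s*im\<bar> - \<bar>u2 + t\<bar>)))"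
  define f2 where "f2 = (\<lambda>(s,t,r). (r * (int n - \<bar>u2 + s*im\<bar> - \<bar>u3 + t\<bar>), u2 + s*im, u3 + t))"
  define f3 where "f3 = (\<lambda>(s,t,r). (u1 + t, r * (int n - \<bar>u3 + s*im\<bar> - \<bar>u1 + t\<bar>), u3 + s*im))"
  have sub: "{a \<in> octV n. rho u a = m} \<subseteq> f1 ` S \<union> f2 ` S \<union> f3 ` S"
  proof
    fix a assume a: "a \<in> {a \<in> octV n. rho u a = m}"
    obtain a1 a2 a3 where aa: "a = (a1,a2,a3)" by (cases a)
    have av: "\<bar>a1\<bar> + \<bar>a2\<bar> + \<bar>a3\<bar> = int n" using a aa by (simp add: octV_def)
    have rm: "max \<bar>u1-a1\<bar> (max \<bar>u2-a2\<bar> \<bar>u3-a3\<bar>) = im"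
      using a aa uu rho_int[of u1 u2 u3 a1 a2 a3] im_def by simp
    define sg' where "sg' = (\<lambda>x::int. if x \<ge> 0 then 1 else -1::int)"
    have sgabs: "\<And>x. sg' x * \<bar>x\<bar> = x" "\<And>x. sg' x \<in> {-1,1}" by (auto simp: sg'_def)
    consider "\<bar>u1-a1\<bar> = im" "\<bar>u2-a2\<bar> \<le> im" | "\<bar>u2-a2\<bar> = im" "\<bar>u3-a3\<bar> \<le> im" | "\<bar>u3-a3\<bar> = im" "\<bar>u1-a1\<bar> \<le> im"
      using rm by linarith
    then show "a \<in> f1 ` S \<union> f2 ` S \<union> f3 ` S"
    proof cases
      case 1
      define s where "s = sg' (a1 - u1)"
      have s1: "a1 = u1 + s*im" using 1 sgabs(1)[of "a1-u1"] unfolding s_def by (simp add: abs_minus_commute)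
      have h: "int n - \<bar>u1 + s*im\<bar> - \<bar>a2\<bar> = \<bar>a3\<bar>" using av s1 by linarith
      have "a = f1 (s, a2 - u2, sg' a3)"
        unfolding f1_def aa using s1 h sgabs(1)[of a3] by simp
      moreover have "(s, a2 - u2, sg' a3) \<in> S" unfolding S_def using 1 sgabs(2) s_def by (auto simp: abs_le_iff)
      ultimately show ?thesis by blast
    next
      case 2
      define s where "s = sg' (a2 - u2)"
      have s1: "a2 = u2 + s*im" using 2 sgabs(1)[of "a2-u2"] unfolding s_def by (simp add: abs_minus_commute)
      have h: "int n - \<bar>u2 + s*im\<bar> - \<bar>a3\<bar> = \<bar>a1\<bar>" using av s1 by linarith
      have "a = f2 (s, a3 - u3, sg' a1)"
        unfolding f2_def aa using s1 h sgabs(1)[of a1] by simp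
      moreover have "(s, a3 - u3, sg' a1) \<in> S" unfolding S_def using 2 sgabs(2) s_def by (auto simp: abs_le_iff)
      ultimately show ?thesis by blast
    next
      case 3
      define s where "s = sg' (a3 - u3)"
      have s1: "a3 = u3 + s*im" using 3 sgabs(1)[of "a3-u3"] unfolding s_def by (simp add: abs_minus_commute)
      have h: "int n - \<bar>u3 + s*im\<bar> - \<bar>a1\<bar> = \<bar>a2\<bar>" using av s1 by linarith
      have "a = f3 (s, a1 - u1, sg' a2)"
        unfolding f3_def aa using s1 h sgabs(1)[of a2] by simp
      moreover have "(s, a1 - u1, sg' a2) \<in> S" unfolding S_def using 3 sgabs(2) s_def by (auto simp: abs_le_iff)
      ultimately show ?thesis by blast
    qed
  qed
  have "card {a \<in> octV n. rho u a = m} \<le> card (f1 ` S \<union> f2 ` S \<union> f3 ` S)"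
    by (rule card_mono[OF _ sub]) (simp add: fS)
  also have "\<dots> \<le> card (f1 ` S) + card (f2 ` S) + card (f3 ` S)"
    by (metis (no_types, lifting) add_le_mono card_Un_le le_trans order_refl)
  also have "\<dots> \<le> card S + card S + card S" by (intro add_mono card_image_le fS)
  finally show ?thesis using cS by simp
qed

lemma Ssum_pos: "n \<ge> 1 \<Longrightarrow> v \<in> octV n \<Longrightarrow> 0 < Ssum n v"
  using Ssum_gt[of n v] by (smt (verit) ln_ge_zero of_nat_0_le_iff)

lemma octZ_eq: "octZ n u = inverse (Ssum n u)"
  by (simp add: octZ_def Ssum_def)

lemma Z_bound: "n \<ge> 1 \<Longrightarrow> v \<in> octV n \<Longrightarrow> 0 \<le> octZ n v \<and> octZ n v \<le> 1 / ln (real n + 1)"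
proof -
  assume n: "n \<ge> 1" and v: "v \<in> octV n"
  have L: "0 < ln (real n + 1)" using n by simp
  have "ln (real n + 1) < Ssum n v" by (rule Ssum_gt[OF n v])
  then have S: "ln (real n + 1) < Ssum n v" "0 < Ssum n v" using L by linarith+
  have "inverse (Ssum n v) \<le> 1 / ln (real n + 1)"
    using S L by (simp add: inverse_eq_divide frac_le less_imp_le)
  then show ?thesis unfolding octZ_eq using S(2) by simp
qed

lemma pmf_choice:
  assumes n: "n \<ge> 1" and u: "u \<in> octV n"
  shows "pmf (choice_pmf n u) a = (if a \<in> octV n - {u} then octZ n u / (real (octd n u a))\<^sup>2 else 0)"
proof -
  define f where "f = (\<lambda>v. if v \<in> octV n - {u} then octZ n u / (real (octd n u v))\<^sup>2 else 0)"
  have Z0: "0 \<le> octZ n u" using Z_bound[OF n u] by simp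
  have nn: "\<And>x. 0 \<le> f x" unfolding f_def using Z0 by simp
  have "(\<integral>\<^sup>+x. ennreal (f x) \<partial>count_space UNIV) = (\<Sum>x\<in>octV n - {u}. ennreal (f x))"
    by (rule nn_integral_count_space') (auto simp: f_def finite_octV)
  also have "\<dots> = ennreal (\<Sum>x\<in>octV n - {u}. f x)" using nn by simp
  also have "(\<Sum>x\<in>octV n - {u}. f x) = octZ n u * Ssum n u"
    unfolding f_def Ssum_def by (simp add: sum_distrib_left)
  also have "\<dots> = 1" unfolding octZ_eq using Ssum_pos[OF n u] by simp
  finally have "(\<integral>\<^sup>+x. ennreal (f x) \<partial>count_space UNIV) = 1" by simp
  then have "pmf (embed_pmf f) a = f a" using pmf_embed_pmf[of f, OF nn] by simp
  then show ?thesis unfolding choice_pmf_def f_def[symmetric] by (simp add: f_def)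
qed

lemma prob_pair:
  assumes n: "n \<ge> 1" and u: "u \<in> octV n" and b: "b \<in> octV n" and ub: "u \<noteq> b"
  shows "measure_pmf.prob (choices_pmf n) {f. f u = a \<and> f b = u}
        = pmf (choice_pmf n u) a * pmf (choice_pmf n b) u"
proof -
  define B where "B = (\<lambda>x. if x = u then {a} else if x = b then {u} else UNIV)"
  have "{f. f u = a \<and> f b = u} = Pi (octV n) B"
  proof (intro equalityI subsetI)
    fix f assume "f \<in> {f. f u = a \<and> f b = u}"
    then have "f u = a" "f b = u" by auto
    then show "f \<in> Pi (octV n) B" unfolding B_def by (intro Pi_I) simp
  next
    fix f assume f: "f \<in> Pi (octV n) B"
    have "f u \<in> B u" by (rule Pi_mem[OF f u])
    moreover have "f b \<in> B b" by (rule Pi_mem[OF f b])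
    ultimately show "f \<in> {f. f u = a \<and> f b = u}" using ub unfolding B_def by simp
  qed
  then have "measure_pmf.prob (choices_pmf n) {f. f u = a \<and> f b = u}
      = (\<Prod>x\<in>octV n. measure_pmf.prob (choice_pmf n x) (B x))"
    unfolding choices_pmf_def by (simp add: measure_Pi_pmf_Pi finite_octV)
  also have "\<dots> = (\<Prod>x\<in>octV n. (if x = u then pmf (choice_pmf n u) a else 1) * (if x = b then pmf (choice_pmf n b) u else 1))"
    by (intro prod.cong) (auto simp: B_def measure_pmf_single ub)
  also have "\<dots> = pmf (choice_pmf n u) a * pmf (choice_pmf n b) u"
    by (simp add: prod.distrib finite_octV u b)
  finally show ?thesis .
qed

lemma rho_le2n: "u \<in> octV n \<Longrightarrow> a \<in> octV n \<Longrightarrow> rho u a \<le> 2*n"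
proof -
  assume u: "u \<in> octV n" and a: "a \<in> octV n"
  obtain u1 u2 u3 where uu: "u = (u1,u2,u3)" by (cases u)
  obtain a1 a2 a3 where aa: "a = (a1,a2,a3)" by (cases a)
  have "\<bar>u1\<bar> + \<bar>u2\<bar> + \<bar>u3\<bar> = int n" "\<bar>a1\<bar> + \<bar>a2\<bar> + \<bar>a3\<bar> = int n"
    using u a uu aa by (auto simp: octV_def)
  then have "max \<bar>u1-a1\<bar> (max \<bar>u2-a2\<bar> \<bar>u3-a3\<bar>) \<le> 2 * int n"
    unfolding max.bounded_iff by arith
  then have "int (rho u a) \<le> 2 * int n" unfolding uu aa rho_int .
  then show ?thesis by simp
qed

lemma T_bound: "N \<ge> 1 \<Longrightarrow> (\<Sum>m=2..N. 1/(real m)^3) + 1/(2 * real N * (real N + 1)) \<le> 1/4"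
proof (induction N rule: nat_induct_at_least)
  case base then show ?case by simp
next
  case (Suc N)
  have N: "real N \<ge> 1" using Suc by simp
  have split: "(\<Sum>m=2..Suc N. 1/(real m)^3) = (\<Sum>m=2..N. 1/(real m)^3) + 1/(real N + 1)^3"
    using Suc by (simp add: add.commute)
  have key: "1/(real N + 1)^3 + 1/(2 * (real N + 1) * (real N + 2)) \<le> 1/(2 * real N * (real N + 1))"
  proof -
    define x where "x = real N"
    have x: "x \<ge> 1" using N x_def by simp
    define A where "A = x*(x+1)*(x+2)"
    have A: "A > 0" using x by (simp add: A_def)
    have q1: "2*(x+1)*(x+2) > 0" using x by (intro mult_pos_pos) auto
    have q2: "2*x*(x+1) > 0" using x by (intro mult_pos_pos) auto
    have q3: "2*A > 0" using A by simp
    have h1: "1/(2*(x+1)*(x+2)) = x/(2*A)"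
      by (subst frac_eq_eq[OF less_imp_neq[OF q1, symmetric] less_imp_neq[OF q3, symmetric]]) (simp add: A_def algebra_simps)
    have h2: "1/(2*x*(x+1)) = (x+2)/(2*A)"
      by (subst frac_eq_eq[OF less_imp_neq[OF q2, symmetric] less_imp_neq[OF q3, symmetric]]) (simp add: A_def algebra_simps)
    have "A \<le> (x+1)^3" unfolding A_def using x by (simp add: power3_eq_cube algebra_simps)
    then have h3: "1/(x+1)^3 \<le> 1/A" using A x by (intro divide_left_mono) auto
    have h4: "1/A = 2/(2*A)" by simp
    have h5: "2/(2*A) + x/(2*A) = (x+2)/(2*A)" by (simp add: add_divide_distrib)
    have "1/(x+1)^3 + 1/(2*(x+1)*(x+2)) \<le> 1/(2*x*(x+1))"
      using h1 h2 h3 h4 h5 by linarith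
    then show ?thesis unfolding x_def .
  qed
  have e2: "1/(2 * real (Suc N) * (real (Suc N) + 1)) = 1/(2 * (real N + 1) * (real N + 2))"
    by (simp add: algebra_simps)
  show ?case using split e2 key Suc.IH by linarith
qed

definition RR :: "nat \<Rightarrow> vtx \<Rightarrow> (vtx \<times> vtx) set" where
  "RR n u = {p \<in> octE n. 2 \<le> rho u (fst p) \<and> 2 \<le> rho u (snd p)}"

lemma finite_RR: "finite (RR n u)"
  unfolding RR_def using finite_octE by simp

lemma RR_swap: "prod.swap ` RR n u = RR n u"
  unfolding RR_def by (auto intro: octE_sym simp: image_iff)

lemma d_small: "u \<in> octV n \<Longrightarrow> a \<in> octV n \<Longrightarrow> a \<noteq> u \<Longrightarrow> rho u a \<le> 1 \<Longrightarrow> octd n u a \<le> 1"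
proof -
  assume "u \<in> octV n" "a \<in> octV n" "a \<noteq> u" "rho u a \<le> 1"
  then have "(u,a) \<in> octE n" using rho1_edge by metis
  then have "(u,a) \<in> octE n ^^ 1" by simp
  then show ?thesis by (rule d_path)
qed

lemma E5_subset:
  assumes u: "u \<in> octV n"
  shows "E5 n u \<subseteq> (\<Union>p\<in>RR n u. {f. f u = fst p \<and> f (snd p) = u})"
proof
  fix f assume "f \<in> E5 n u"
  then obtain a b where ab: "u \<noteq> a" "a \<noteq> b" "b \<noteq> u" "octd n u a \<ge> 2" "f u = a"
     "{a, b} \<in> {{v, w} | v w. (v, w) \<in> octE n}" "octd n b u \<ge> 2" "f b = u"
    unfolding E5_def by blast
  obtain v w where vw: "{a,b} = {v,w}" "(v,w) \<in> octE n" using ab(6) by blast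
  have E: "(a,b) \<in> octE n" using vw unfolding doubleton_eq_iff using octE_sym by blast
  have aV: "a \<in> octV n" and bV: "b \<in> octV n" using octE_V[OF E] by auto
  have ra: "2 \<le> rho u a"
  proof (rule ccontr)
    assume "\<not> 2 \<le> rho u a"
    then have "octd n u a \<le> 1" using d_small[OF u aV] ab(1) by simp
    then show False using ab(4) by simp
  qed
  have rb: "2 \<le> rho u b"
  proof (rule ccontr)
    assume "\<not> 2 \<le> rho u b"
    then have "rho b u \<le> 1" using rho_sym[of b u] by simp
    then have "octd n b u \<le> 1" using d_small[OF bV u] ab(3) by simp
    then show False using ab(7) by simp
  qed
  have "(a,b) \<in> RR n u" unfolding RR_def using E ra rb by simp
  then show "f \<in> (\<Union>p\<in>RR n u. {f. f u = fst p \<and> f (snd p) = u})" using ab(5,8) by force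
qed

lemma pmf_bound:
  assumes n: "n \<ge> 1" and u: "u \<in> octV n" and a: "a \<in> octV n" and au: "a \<noteq> u" and r: "1 \<le> rho u a"
  shows "pmf (choice_pmf n u) a \<le> (1 / ln (real n + 1)) * (1 / (real (rho u a))^2)"
proof -
  have Z: "0 \<le> octZ n u" "octZ n u \<le> 1 / ln (real n + 1)" using Z_bound[OF n u] by auto
  have d: "rho u a \<le> octd n u a" by (rule d_ge_rho[OF u a])
  have "pmf (choice_pmf n u) a = octZ n u * (1 / (real (octd n u a))^2)"
    using pmf_choice[OF n u, of a] a au by simp
  also have "\<dots> \<le> (1 / ln (real n + 1)) * (1 / (real (rho u a))^2)"
  proof (rule mult_mono)
    show "1 / (real (octd n u a))^2 \<le> 1 / (real (rho u a))^2"
      using d r by (intro divide_left_mono power_mono) auto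
  qed (use Z n in auto)
  finally show ?thesis .
qed

lemma amgm: "(x::real) > 0 \<Longrightarrow> y > 0 \<Longrightarrow> 1/(x^2*y^2) \<le> (1/x^4 + 1/y^4)/2"
proof -
  assume x: "x > 0" and y: "y > 0"
  define X where "X = 1/x^2"
  define Y where "Y = 1/y^2"
  have e: "1/(x^2*y^2) = X*Y" "1/x^4 = X^2" "1/y^4 = Y^2"
    unfolding X_def Y_def by (simp_all add: power_one_over flip: power_mult)
  have "0 \<le> (X - Y)^2" by simp
  then have "X*Y \<le> (X^2 + Y^2)/2" by (simp add: power2_diff)
  then show ?thesis using e by simp
qed

lemma G3: "(\<Sum>p\<in>RR n u. 1/((real (rho u (fst p)))^2 * (real (rho u (snd p)))^2))
          \<le> (\<Sum>p\<in>RR n u. 1/(real (rho u (fst p)))^4)"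
proof -
  define h where "h = (\<lambda>a. 1/(real (rho u a))^4)"
  have pos: "\<And>p. p \<in> RR n u \<Longrightarrow> real (rho u (fst p)) > 0 \<and> real (rho u (snd p)) > 0"
    unfolding RR_def by auto
  have "(\<Sum>p\<in>RR n u. 1/((real (rho u (fst p)))^2 * (real (rho u (snd p)))^2))
      \<le> (\<Sum>p\<in>RR n u. (h (fst p) + h (snd p))/2)"
    unfolding h_def by (intro sum_mono amgm) (use pos in auto)
  also have "\<dots> = ((\<Sum>p\<in>RR n u. h (fst p)) + (\<Sum>p\<in>RR n u. h (snd p)))/2"
    by (simp only: sum_divide_distrib[symmetric] sum.distrib)
  also have "(\<Sum>p\<in>RR n u. h (snd p)) = (\<Sum>p\<in>RR n u. h (fst p))"
  proof -
    have "(\<Sum>p\<in>RR n u. h (fst p)) = (\<Sum>p\<in>prod.swap ` RR n u. h (fst p))" by (simp add: RR_swap)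
    also have "\<dots> = (\<Sum>p\<in>RR n u. h (fst (prod.swap p)))"
      by (subst sum.reindex) (auto simp: inj_on_def)
    finally show ?thesis by simp
  qed
  finally show ?thesis unfolding h_def by simp
qed

lemma G4:
  "(\<Sum>p\<in>RR n u. 1/(real (rho u (fst p)))^4) \<le> 6 * (\<Sum>a\<in>{a\<in>octV n. 2 \<le> rho u a}. 1/(real (rho u a))^4)"
proof -
  define A where "A = {a\<in>octV n. 2 \<le> rho u a}"
  define Nb where "Nb = (\<lambda>a. {b. (a,b) \<in> octE n})"
  define h where "h = (\<lambda>a. 1/(real (rho u a))^4)"
  have finA: "finite A" unfolding A_def using finite_octV by simp
  have finNb: "\<And>a. finite (Nb a)"
  proof -
    fix a have "Nb a \<subseteq> octV n" unfolding Nb_def using octE_V by blast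
    then show "finite (Nb a)" using finite_subset finite_octV by auto
  qed
  have sub: "RR n u \<subseteq> Sigma A Nb"
  proof
    fix p assume p: "p \<in> RR n u"
    obtain a b where ab: "p = (a,b)" by (cases p)
    have "(a,b) \<in> octE n" "2 \<le> rho u a" using p ab unfolding RR_def by auto
    then show "p \<in> Sigma A Nb" using octE_V[of a b n] ab unfolding A_def Nb_def by simp
  qed
  have "(\<Sum>p\<in>RR n u. h (fst p)) \<le> (\<Sum>p\<in>Sigma A Nb. h (fst p))"
    by (rule sum_mono2) (use finA finNb sub in \<open>auto simp: h_def\<close>)
  also have "\<dots> = (\<Sum>a\<in>A. \<Sum>b\<in>Nb a. h a)"
    by (subst sum.Sigma) (use finA finNb in \<open>auto simp: case_prod_beta\<close>)
  also have "\<dots> = (\<Sum>a\<in>A. real (card (Nb a)) * h a)" by simp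
  also have "\<dots> \<le> (\<Sum>a\<in>A. 6 * h a)"
  proof (rule sum_mono)
    fix a show "real (card (Nb a)) * h a \<le> 6 * h a"
      using deg6[of a n] by (intro mult_right_mono) (auto simp: Nb_def h_def)
  qed
  finally show ?thesis unfolding A_def h_def by (simp add: sum_distrib_left)
qed

lemma G5:
  assumes u: "u \<in> octV n"
  shows "(\<Sum>a\<in>{a\<in>octV n. 2 \<le> rho u a}. 1/(real (rho u a))^4) \<le> 30 * (\<Sum>m=2..2*n. 1/(real m)^3)"
proof -
  obtain u1 u2 u3 where uu: "u = (u1,u2,u3)" by (cases u)
  define A where "A = {a\<in>octV n. 2 \<le> rho u a}"
  define h where "h = (\<lambda>m::nat. 1/(real m)^4)"
  have finA: "finite A" unfolding A_def using finite_octV by simp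
  have img: "rho u ` A \<subseteq> {2..2*n}" unfolding A_def using rho_le2n[OF u] by auto
  have "(\<Sum>a\<in>A. h (rho u a)) = (\<Sum>m\<in>{2..2*n}. \<Sum>a\<in>{a \<in> A. rho u a = m}. h (rho u a))"
    by (rule sum.group[symmetric]) (use finA img in auto)
  also have "\<dots> = (\<Sum>m\<in>{2..2*n}. real (card {a \<in> A. rho u a = m}) * h m)"
    by (intro sum.cong) auto
  also have "\<dots> \<le> (\<Sum>m\<in>{2..2*n}. 30 * (1/(real m)^3))"
  proof (rule sum_mono)
    fix m assume m: "m \<in> {2..2*n}"
    have "{a \<in> A. rho u a = m} \<subseteq> {a \<in> octV n. rho u a = m}" unfolding A_def by auto
    then have "card {a \<in> A. rho u a = m} \<le> card {a \<in> octV n. rho u a = m}"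
      by (rule card_mono[rotated]) (simp add: finite_octV)
    also have "\<dots> \<le> 12 * (2*m+1)" by (rule shell_count[OF uu])
    finally have c: "real (card {a \<in> A. rho u a = m}) \<le> 30 * real m" using m by simp
    have "real (card {a \<in> A. rho u a = m}) * h m \<le> (30 * real m) * h m"
      using c by (intro mult_right_mono) (auto simp: h_def)
    also have "\<dots> = 30 * (1/(real m)^3)" using m by (simp add: h_def power_eq_if)
    finally show "real (card {a \<in> A. rho u a = m}) * h m \<le> 30 * (1/(real m)^3)" .
  qed
  finally show ?thesis unfolding A_def h_def by (simp add: sum_distrib_left)
qed

lemma rho_self: "rho a a = 0" by (cases a) (simp add: rho_simp)

theorem lemma9:
  fixes n :: nat and u :: vtx
  assumes "n \<ge> 1" and "u \<in> octV n"
  shows "measure_pmf.prob (choices_pmf n) (E5 n u)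
           < 36 * (\<Sum>i. 1 / (real (Suc i)) ^ 3) / (ln (real n + 1))\<^sup>2"
proof -
  note n = assms(1) and u = assms(2)
  define L where "L = ln (real n + 1)"
  have L: "0 < L" unfolding L_def using n by simp
  define T where "T = (\<Sum>m=2..2*n. 1/(real m)^3)"
  define R where "R = RR n u"
  define \<rho> where "\<rho> = (\<lambda>a. real (rho u a))"
  have "measure_pmf.prob (choices_pmf n) (E5 n u)
      \<le> measure_pmf.prob (choices_pmf n) (\<Union>p\<in>R. {f. f u = fst p \<and> f (snd p) = u})"
    unfolding R_def by (rule measure_pmf.finite_measure_mono[OF E5_subset[OF u]]) simp
  also have "\<dots> \<le> (\<Sum>p\<in>R. measure_pmf.prob (choices_pmf n) {f. f u = fst p \<and> f (snd p) = u})"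
    by (rule measure_UNION_le) (auto simp: R_def finite_RR)
  also have "\<dots> \<le> (\<Sum>p\<in>R. (1/L)^2 * (1/((\<rho> (fst p))^2 * (\<rho> (snd p))^2)))"
  proof (rule sum_mono)
    fix p assume p: "p \<in> R"
    obtain a b where ab: "p = (a,b)" by (cases p)
    have E: "(a,b) \<in> octE n" and ra: "2 \<le> rho u a" and rb: "2 \<le> rho u b"
      using p ab unfolding R_def RR_def by auto
    have aV: "a \<in> octV n" and bV: "b \<in> octV n" using octE_V[OF E] by auto
    have au: "a \<noteq> u" using ra rho_self[of u] by auto
    have bu: "u \<noteq> b" using rb rho_self[of u] by auto
    have rb': "1 \<le> rho b u" using rb rho_sym[of b u] by simp
    have "measure_pmf.prob (choices_pmf n) {f. f u = a \<and> f b = u}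
        = pmf (choice_pmf n u) a * pmf (choice_pmf n b) u"
      by (rule prob_pair[OF n u bV bu])
    also have "\<dots> \<le> ((1/L) * (1/(\<rho> a)^2)) * ((1/L) * (1/(\<rho> b)^2))"
    proof (rule mult_mono)
      show "pmf (choice_pmf n u) a \<le> (1/L) * (1/(\<rho> a)^2)"
        using pmf_bound[OF n u aV au] ra unfolding L_def \<rho>_def by simp
      show "pmf (choice_pmf n b) u \<le> (1/L) * (1/(\<rho> b)^2)"
        using pmf_bound[OF n bV u bu rb'] rho_sym[of b u] unfolding L_def \<rho>_def by simp
    qed (use L in auto)
    also have "\<dots> = (1/L)^2 * (1/((\<rho> a)^2 * (\<rho> b)^2))" by (simp add: power2_eq_square)
    finally show "measure_pmf.prob (choices_pmf n) {f. f u = fst p \<and> f (snd p) = u}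
        \<le> (1/L)^2 * (1/((\<rho> (fst p))^2 * (\<rho> (snd p))^2))" using ab by simp
  qed
  also have "\<dots> = (1/L)^2 * (\<Sum>p\<in>R. 1/((\<rho> (fst p))^2 * (\<rho> (snd p))^2))"
    by (simp add: sum_distrib_left)
  also have "\<dots> \<le> (1/L)^2 * (6 * (30 * T))"
  proof (rule mult_left_mono)
    have "(\<Sum>p\<in>R. 1/((\<rho> (fst p))^2 * (\<rho> (snd p))^2)) \<le> (\<Sum>p\<in>R. 1/(\<rho> (fst p))^4)"
      unfolding R_def \<rho>_def by (rule G3)
    also have "\<dots> \<le> 6 * (\<Sum>a\<in>{a\<in>octV n. 2 \<le> rho u a}. 1/(\<rho> a)^4)"
      unfolding R_def \<rho>_def by (rule G4)
    also have "\<dots> \<le> 6 * (30 * T)"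
      using G5[OF u] unfolding T_def \<rho>_def by simp
    finally show "(\<Sum>p\<in>R. 1/((\<rho> (fst p))^2 * (\<rho> (snd p))^2)) \<le> 6 * (30 * T)" .
  qed simp
  also have "\<dots> < 36 * (\<Sum>i. 1 / (real (Suc i)) ^ 3) / L^2"
  proof -
    have N: "2*n \<ge> 1" using n by simp
    have Tb: "T + 1/(2 * real (2*n) * (real (2*n) + 1)) \<le> 1/4"
      using T_bound[OF N] unfolding T_def .
    have "0 < 1/(2 * real (2*n) * (real (2*n) + 1))" using n by simp
    then have T4: "T < 1/4" using Tb by linarith
    have summ: "summable (\<lambda>i. 1 / (real (Suc i)) ^ 3)"
    proof -
      have "summable (\<lambda>i. inverse (real i ^ 3))" by (rule inverse_power_summable) simp
      then have "summable (\<lambda>i. inverse (real (Suc i) ^ 3))"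
        by (subst summable_Suc_iff)
      then show ?thesis by (simp add: inverse_eq_divide)
    qed
    have "(\<Sum>i<2*n. 1 / (real (Suc i)) ^ 3) \<le> (\<Sum>i. 1 / (real (Suc i)) ^ 3)"
      by (rule sum_le_suminf[OF summ]) auto
    moreover have "(\<Sum>i<2*n. 1 / (real (Suc i)) ^ 3) = (\<Sum>m=1..2*n. 1/(real m)^3)"
      by (rule sum_bounds_lt_plus1)
    moreover have "(\<Sum>m=1..2*n. 1/(real m)^3) = 1 + T"
      unfolding T_def using N by (subst sum.atLeast_Suc_atMost) (auto simp: numeral_2_eq_2)
    ultimately have z: "1 + T \<le> (\<Sum>i. 1 / (real (Suc i)) ^ 3)" by simp
    have "180 * T < 36 * (\<Sum>i. 1 / (real (Suc i)) ^ 3)" using z T4 by linarith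
    then have "(1/L)^2 * (180 * T) < (1/L)^2 * (36 * (\<Sum>i. 1 / (real (Suc i)) ^ 3))"
      using L by (intro mult_strict_left_mono) auto
    then show ?thesis by (simp add: power_divide)
  qed
  finally show ?thesis unfolding L_def .
qed

end
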